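(* Consider a Time-and-Level-of-Use (TLOU) tariff for a single time frame $t$, given by a booking fee $K>0$, a step-wise non-increasing lower price function $\pi^L:[0,\infty)\to\mathbb{R}$ with finite set of breakpoints $C^L$, and a step-wise non-decreasing higher price function $\pi^H:[0,\infty)\to\mathbb{R}$ with finite set of breakpoints $C^H$, where $\pi^L(0)=\pi^H(0)=\pi_0(t)$. Let the user's consumption be a discrete random variable with finite support given by scenarios $\omega\in\Omega_t$, with consumption levels $x_\omega\ge 0$ and probabilities $p_\omega>0$. For a booked capacity $c\ge 0$ let $$\mathcal{C}(c)=K\cdot c+\sum_{\omega\in\Omega_t} x_\omega\, p_\omega\left(\pi^L(c)\,\mathbb{1}[x_\omega\le c]+\pi^H(c)\,\mathbb{1}[x_\omega>c]\right)$$ be the user's expected cost. Then any capacity $c^\ast\ge 0$ minimizing $\mathcal{C}$ over $c\ge 0$ (an optimal booked capacity for the user at time frame $t$) belongs to the finite set $$S_t=\{0\}\cup C^L\cup\{x_\omega:\omega\in\Omega_t\}.$$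
   Context: Under TLOU, a user books a capacity $c\ge0$ for a time frame $t$; if the realized consumption $x$ satisfies $x\le c$ the total cost is $K c+\pi^L(c)x$, and otherwise it is $Kc+\pi^H(c)x$. The price functions are step functions: for breakpoints $c_1<c_2<\dots<c_m$ in $C^L$ (all positive), $\pi^L$ is constant on $[0,c_1)$ (equal to $\pi_0(t)$, the Time-of-Use price of the time frame) and on each interval $[c_j,c_{j+1})$ and $[c_m,\infty)$, with its values non-increasing from one step to the next; $\pi^H$ is defined analogously with breakpoints $C^H$ and values non-decreasing from one step to the next. The notation $\mathbb{1}[\cdot]$ denotes the indicator of the condition. *)

theory Defs
  imports Main "HOL-Library.Indicator_Function"
begin

text \<open>A step function on [0,\<infinity>) with finite set of positive breakpoints B:
  it is constant on [0, b1), on each [b_j, b_(j+1)) and on [b_m, \<infinity>).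
  Equivalently: two points x \<le> y of [0,\<infinity>) with no breakpoint b in (x, y]
  lie in the same step and get the same value.\<close>
definition step_function_on :: "real set \<Rightarrow> (real \<Rightarrow> real) \<Rightarrow> bool" where
  "step_function_on B f \<longleftrightarrow> finite B \<and> (\<forall>b\<in>B. b > 0) \<and>
     (\<forall>x y. 0 \<le> x \<longrightarrow> x \<le> y \<longrightarrow> \<not> (\<exists>b\<in>B. x < b \<and> b \<le> y) \<longrightarrow> f x = f y)"

definition tlou_cost ::
  "real \<Rightarrow> (real \<Rightarrow> real) \<Rightarrow> (real \<Rightarrow> real) \<Rightarrow> 'w set \<Rightarrow> ('w \<Rightarrow> real) \<Rightarrow> ('w \<Rightarrow> real) \<Rightarrow> real \<Rightarrow> real"
where
  "tlou_cost K piL piH \<Omega> x p c =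
     K * c + (\<Sum>\<omega>\<in>\<Omega>. x \<omega> * p \<omega> *
        (piL c * indicator {..c} (x \<omega>) + piH c * indicator {c<..} (x \<omega>)))"

end

theory Submission
  imports Defs
begin

theorem proposition1:
  fixes K pi0 :: real
    and piL piH :: "real \<Rightarrow> real"
    and CL CH :: "real set"
    and \<Omega> :: "'w set"
    and x p :: "'w \<Rightarrow> real"
    and cstar :: real
  assumes K_pos: "K > 0"
    and L_step: "step_function_on CL piL"
    and L_noninc: "\<forall>a b. 0 \<le> a \<longrightarrow> a \<le> b \<longrightarrow> piL b \<le> piL a"
    and H_step: "step_function_on CH piH"
    and H_nondec: "\<forall>a b. 0 \<le> a \<longrightarrow> a \<le> b \<longrightarrow> piH a \<le> piH b"
    and L0: "piL 0 = pi0" and H0: "piH 0 = pi0"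
    and fin: "finite \<Omega>"
    and x_nonneg: "\<forall>\<omega>\<in>\<Omega>. x \<omega> \<ge> 0"
    and p_pos: "\<forall>\<omega>\<in>\<Omega>. p \<omega> > 0"
    and p_sum: "(\<Sum>\<omega>\<in>\<Omega>. p \<omega>) = 1"
    and cstar_nonneg: "cstar \<ge> 0"
    and cstar_opt: "\<forall>c\<ge>0. tlou_cost K piL piH \<Omega> x p cstar \<le> tlou_cost K piL piH \<Omega> x p c"
  shows "cstar \<in> {0} \<union> CL \<union> x ` \<Omega>"
proof (rule ccontr)
  assume nin: "cstar \<notin> {0} \<union> CL \<union> x ` \<Omega>"
  define F where "F = {b \<in> {0} \<union> CL \<union> x ` \<Omega>. b < cstar}"
  have finCL: "finite CL" using L_step unfolding step_function_on_def by blast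
  have Ffin: "finite F" unfolding F_def using finCL fin by auto
  have cpos: "cstar > 0" using nin cstar_nonneg by auto
  have F0: "0 \<in> F" unfolding F_def using cpos by auto
  define m where "m = Max F"
  have mF: "m \<in> F" unfolding m_def using Ffin F0 by (intro Max_in) auto
  have mle: "\<And>b. b \<in> F \<Longrightarrow> b \<le> m" unfolding m_def using Ffin by simp
  have m0: "m \<ge> 0" using mle F0 by simp
  have mlt: "m < cstar" using mF unfolding F_def by simp
  define c' where "c' = (m + cstar) / 2"
  have c'0: "c' \<ge> 0" and c'lt: "c' < cstar" and mc': "m < c'" using m0 mlt unfolding c'_def by auto
  have noCL: "\<not> (\<exists>b\<in>CL. c' < b \<and> b \<le> cstar)"
  proof
    assume "\<exists>b\<in>CL. c' < b \<and> b \<le> cstar"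
    then obtain b where b: "b \<in> CL" "c' < b" "b \<le> cstar" by blast
    have "b \<noteq> cstar" using b nin by auto
    hence "b \<in> F" unfolding F_def using b by auto
    thus False using mle b mc' by force
  qed
  have Lst: "\<forall>x y. 0 \<le> x \<longrightarrow> x \<le> y \<longrightarrow> \<not> (\<exists>b\<in>CL. x < b \<and> b \<le> y) \<longrightarrow> piL x = piL y"
    using L_step unfolding step_function_on_def by blast
  have Leq: "piL c' = piL cstar" using Lst c'0 c'lt noCL by simp
  have Hle: "piH c' \<le> piH cstar" using H_nondec c'0 c'lt by auto
  have ind: "\<And>w. w \<in> \<Omega> \<Longrightarrow> (x w \<le> c') = (x w \<le> cstar)"
  proof -
    fix w assume w: "w \<in> \<Omega>"
    show "(x w \<le> c') = (x w \<le> cstar)"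
    proof
      assume "x w \<le> cstar"
      moreover have "x w \<noteq> cstar" using nin w by auto
      ultimately have "x w \<in> F" unfolding F_def using w by auto
      thus "x w \<le> c'" using mle mc' by force
    qed (use c'lt in auto)
  qed
  have termle: "x w * p w * (piL c' * indicator {..c'} (x w) + piH c' * indicator {c'<..} (x w))
      \<le> x w * p w * (piL cstar * indicator {..cstar} (x w) + piH cstar * indicator {cstar<..} (x w))"
    if w: "w \<in> \<Omega>" for w
  proof -
    have xp: "x w * p w \<ge> 0" using x_nonneg p_pos w by (simp add: less_imp_le)
    have "piL c' * indicator {..c'} (x w) + piH c' * indicator {c'<..} (x w)
      \<le> piL cstar * indicator {..cstar} (x w) + piH cstar * indicator {cstar<..} (x w)"
      using ind[OF w] Leq Hle by (cases "x w \<le> cstar") (simp_all add: indicator_def not_le)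
    thus ?thesis using xp by (rule mult_left_mono)
  qed
  have Kc: "K * c' < K * cstar" using K_pos c'lt by simp
  have S: "(\<Sum>w\<in>\<Omega>. x w * p w * (piL c' * indicator {..c'} (x w) + piH c' * indicator {c'<..} (x w)))
      \<le> (\<Sum>w\<in>\<Omega>. x w * p w * (piL cstar * indicator {..cstar} (x w) + piH cstar * indicator {cstar<..} (x w)))"
    by (rule sum_mono) (rule termle)
  have "tlou_cost K piL piH \<Omega> x p c' < tlou_cost K piL piH \<Omega> x p cstar"
    unfolding tlou_cost_def using S Kc by linarith
  thus False using cstar_opt c'0 by fastforce
qed

end
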